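(* Let $G$ be the infinite triangular grid. The code $C=\{v(i,j)\mid i\equiv 0 \pmod 2,\ j\equiv 0\pmod 2\}$ is self-locating-dominating in $G$, and therefore also solid-locating-dominating. The density of $C$ equals $1/4$, and there exists no self-locating-dominating code and no solid-locating-dominating code in $G$ with density smaller than $1/4$.
   Context: The infinite triangular grid $G=(V,E)$ has vertex set $V=\{v(i,j)\mid i,j\in\mathbb{Z}\}$ where $v(i,j)=i(1,0)+j(\tfrac12,\tfrac{\sqrt3}{2})\in\mathbb{R}^2$, and two vertices are adjacent iff their Euclidean distance is $1$. Let $V_n=\{v(i,j)\mid |i|,|j|\le n\}$; the density of a code $C\subseteq V$ is $D(C)=\limsup_{n\to\infty}|C\cap V_n|/|V_n|$. $N[v]$ is the closed neighbourhood of $v$, and for a code (nonempty subset) $C$, $I(C;v)=N[v]\cap C$. A code $C$ is self-locating-dominating if for every $u\in V\setminus C$, $I(C;u)\ne\emptyset$ and $\bigcap_{c\in I(C;u)}N[c]=\{u\}$. A code $C$ is solid-locating-dominating if for all distinct $u,v\in V\setminus C$, $I(C;u)\setminus I(C;v)\neq\emptyset$. *)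

theory Defs
  imports Complex_Main "HOL-Library.Extended_Real" "HOL-Library.Liminf_Limsup"
begin

text \<open>Vertices of the infinite triangular grid are indexed by pairs (i,j) of integers;
  the vertex v(i,j) is the point i(1,0) + j(1/2, sqrt 3/2) of the plane (here as a complex number).
  The map v is injective, so we identify V with int x int.\<close>

type_synonym vtx = "int \<times> int"

definition tgpos :: "vtx \<Rightarrow> complex" where
  "tgpos p = of_int (fst p) + of_int (snd p) * Complex (1/2) (sqrt 3 / 2)"

definition tg_adj :: "vtx \<Rightarrow> vtx \<Rightarrow> bool" where
  "tg_adj p q \<longleftrightarrow> dist (tgpos p) (tgpos q) = 1"

definition cnbh :: "vtx \<Rightarrow> vtx set" where
  "cnbh v = {u. u = v \<or> tg_adj u v}"

definition Iset :: "vtx set \<Rightarrow> vtx \<Rightarrow> vtx set" where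
  "Iset C v = cnbh v \<inter> C"

definition Vbox :: "nat \<Rightarrow> vtx set" where
  "Vbox n = {(i, j). \<bar>i\<bar> \<le> int n \<and> \<bar>j\<bar> \<le> int n}"

definition density :: "vtx set \<Rightarrow> ereal" where
  "density C = limsup (\<lambda>n. ereal (real (card (C \<inter> Vbox n)) / real (card (Vbox n))))"

definition self_locating_dominating :: "vtx set \<Rightarrow> bool" where
  "self_locating_dominating C \<longleftrightarrow> C \<noteq> {} \<and>
     (\<forall>u. u \<notin> C \<longrightarrow> Iset C u \<noteq> {} \<and> (\<Inter>c\<in>Iset C u. cnbh c) = {u})"

definition solid_locating_dominating :: "vtx set \<Rightarrow> bool" where
  "solid_locating_dominating C \<longleftrightarrow> C \<noteq> {} \<and>
     (\<forall>u v. u \<notin> C \<longrightarrow> v \<notin> C \<longrightarrow> u \<noteq> v \<longrightarrow> Iset C u - Iset C v \<noteq> {})"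

end

theory Submission imports Defs begin

lemma tg_adj_iff: "tg_adj (a,b) (c,d) \<longleftrightarrow> (a-c)^2 + (a-c)*(b-d) + (b-d)^2 = 1"
proof -
  have e: "tgpos (a,b) - tgpos (c,d) = Complex (real_of_int (a-c) + real_of_int (b-d)/2) (real_of_int (b-d) * sqrt 3 / 2)"
    by (simp add: tgpos_def complex_eq_iff field_simps)
  have s: "(sqrt 3)^2 = 3" by simp
  have g: "(x + y/2)^2 + (y * sqrt 3 / 2)^2 = x^2 + x*y + y^2" for x y :: real
  proof -
    have "(y * sqrt 3 / 2)^2 = y^2*3/4" by (simp add: power_mult_distrib power_divide s)
    then show ?thesis by (simp add: power2_eq_square field_simps)
  qed
  have "(real_of_int (a-c) + real_of_int (b-d)/2)^2 + (real_of_int (b-d) * sqrt 3 / 2)^2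
        = real_of_int ((a-c)^2 + (a-c)*(b-d) + (b-d)^2)"
    unfolding g by simp
  then have "dist (tgpos (a,b)) (tgpos (c,d)) = sqrt (real_of_int ((a-c)^2 + (a-c)*(b-d) + (b-d)^2))"
    by (simp add: dist_norm e cmod_def)
  then show ?thesis unfolding tg_adj_def by (metis of_int_eq_1_iff real_sqrt_eq_1_iff)
qed

lemma quad_sol: "(x::int)^2 + x*y + y^2 = 1 \<longleftrightarrow> (x,y) \<in> {(1,0),(-1,0),(0,1),(0,-1),(1,-1),(-1,1)}"
proof
  assume h: "x^2 + x*y + y^2 = 1"
  have "(2*x+y)^2 + 3*y^2 = 4" using h by (simp add: power2_eq_square algebra_simps)
  then have "y^2 \<le> 1" by (smt (verit) zero_le_power2)
  then have y: "\<bar>y\<bar> \<le> 1" by (metis abs_le_square_iff abs_one one_power2)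
  have "(2*y+x)^2 + 3*x^2 = 4" using h by (simp add: power2_eq_square algebra_simps)
  then have "x^2 \<le> 1" by (smt (verit) zero_le_power2)
  then have x: "\<bar>x\<bar> \<le> 1" by (metis abs_le_square_iff abs_one one_power2)
  have "x \<in> {-1,0,1}" "y \<in> {-1,0,1}" using x y by auto
  then show "(x,y) \<in> {(1,0),(-1,0),(0,1),(0,-1),(1,-1),(-1,1)}" using h by auto
qed auto

lemma cnbh_eq: "cnbh (i,j) = {(i,j),(i+1,j),(i-1,j),(i,j+1),(i,j-1),(i+1,j-1),(i-1,j+1)}"
proof -
  have adj: "tg_adj (a,b) (i,j) \<longleftrightarrow> (a,b) \<in> {(i+1,j),(i-1,j),(i,j+1),(i,j-1),(i+1,j-1),(i-1,j+1)}" for a b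
  proof -
    have "tg_adj (a,b) (i,j) \<longleftrightarrow> (a-i,b-j) \<in> {(1,0),(-1,0),(0,1),(0,-1),(1,-1),(-1,1)}"
      unfolding tg_adj_iff quad_sol ..
    also have "\<dots> \<longleftrightarrow> (a,b) \<in> {(i+1,j),(i-1,j),(i,j+1),(i,j-1),(i+1,j-1),(i-1,j+1)}"
      by (simp add: algebra_simps)
    finally show ?thesis .
  qed
  show ?thesis
  proof (rule set_eqI)
    fix u :: vtx
    obtain a b where u: "u = (a,b)" by (cases u)
    show "u \<in> cnbh (i,j) \<longleftrightarrow> u \<in> {(i,j),(i+1,j),(i-1,j),(i,j+1),(i,j-1),(i+1,j-1),(i-1,j+1)}"
      unfolding u cnbh_def mem_Collect_eq adj by (simp only: insert_iff)
  qed
qed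

lemma cnbh_sym: "u \<in> cnbh v \<longleftrightarrow> v \<in> cnbh u"
  unfolding cnbh_def tg_adj_def by (auto simp: dist_commute)

lemma cnbh_self: "u \<in> cnbh u" unfolding cnbh_def by auto

lemma finite_cnbh: "finite (cnbh u)"
  by (cases u) (simp add: cnbh_eq)

lemma card_cnbh: "card (cnbh u) = 7"
  by (cases u) (simp add: cnbh_eq)

lemma finite_Iset: "finite (Iset C u)"
  unfolding Iset_def using finite_cnbh by auto

lemma Vbox_eq: "Vbox n = {-int n..int n} \<times> {-int n..int n}"
  unfolding Vbox_def by auto

lemma card_Vbox: "card (Vbox n) = (2*n+1)^2"
proof -
  have "card {-int n..int n} = 2*n+1" by simp
  then show ?thesis by (simp add: Vbox_eq card_cartesian_product power2_eq_square)
qed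

lemma finite_Vbox: "finite (Vbox n)" by (simp add: Vbox_eq)

lemma cnbh_Vbox: "u \<in> Vbox n \<Longrightarrow> c \<in> cnbh u \<Longrightarrow> c \<in> Vbox (Suc n)"
  by (cases u) (auto simp: cnbh_eq Vbox_def)


lemma sum7:
  fixes f :: "'a \<Rightarrow> real"
  assumes "finite S" "card S = 7" "\<forall>x\<in>S. f x \<le> 1" "\<forall>x\<in>S-{a}. f x \<le> 1/2"
  shows "sum f S \<le> 4"
proof (cases "a \<in> S")
  case True
  have "sum f S = f a + sum f (S-{a})" using True assms(1) by (simp add: sum.remove)
  also have "sum f (S-{a}) \<le> real (card (S-{a})) * (1/2)"
    using sum_bounded_above[of "S-{a}" f "1/2"] assms(4) by auto
  also have "card (S-{a}) = 6" using True assms by simp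
  finally have "sum f S \<le> f a + 3" by simp
  moreover have "f a \<le> 1" using True assms(3) by blast
  ultimately show ?thesis by linarith
next
  case False
  have "sum f S \<le> real (card S) * (1/2)"
    using sum_bounded_above[of S f "1/2"] assms(4) False by auto
  then show ?thesis using assms(2) by simp
qed

lemma card_ge2: "finite S \<Longrightarrow> x \<in> S \<Longrightarrow> y \<in> S \<Longrightarrow> x \<noteq> y \<Longrightarrow> card S \<ge> 2"
  by (metis card_2_iff card_mono empty_subsetI insert_subset)

lemma share:
  assumes sol: "solid_locating_dominating C" and cC: "c \<in> C"
  shows "(\<Sum>u\<in>cnbh c. 1 / real (card (Iset C u))) \<le> 4"
proof -
  have cin: "c \<in> Iset C u" if "u \<in> cnbh c" for u
    using that cC cnbh_sym unfolding Iset_def by auto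
  have ge1: "card (Iset C u) \<ge> 1" if "u \<in> cnbh c" for u
    using cin[OF that] finite_Iset by (metis One_nat_def Suc_leI card_gt_0_iff empty_iff)
  have le1: "\<forall>u\<in>cnbh c. 1 / real (card (Iset C u)) \<le> 1"
  proof
    fix u assume "u \<in> cnbh c"
    then have "real (card (Iset C u)) \<ge> 1" using ge1 by simp
    then show "1 / real (card (Iset C u)) \<le> 1" by simp
  qed
  have half: "1 / real (card (Iset C u)) \<le> 1/2" if "card (Iset C u) \<ge> 2" for u
    using that by (simp add: field_simps)
  have neighC: "card (Iset C x) \<ge> 2" if "x \<in> cnbh c" "x \<in> C" "x \<noteq> c" for x
    by (rule card_ge2[OF finite_Iset cin[OF that(1)], of x]) (use that cnbh_self in \<open>auto simp: Iset_def\<close>)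
  show ?thesis
  proof (cases "\<exists>a\<in>cnbh c. a \<noteq> c \<and> a \<notin> C \<and> Iset C a = {c}")
    case True
    then obtain a where a: "a \<in> cnbh c" "a \<noteq> c" "a \<notin> C" "Iset C a = {c}" by blast
    have allC: "w \<in> C" if "w \<in> cnbh c" "w \<noteq> a" for w
    proof (rule ccontr)
      assume "w \<notin> C"
      then have "Iset C a - Iset C w \<noteq> {}" using sol a(3) that(2)
        unfolding solid_locating_dominating_def by blast
      then show False using a cin[OF that(1)] by auto
    qed
    have "card (cnbh c - {c, a}) = 5" using a card_cnbh[of c] cnbh_self[of c] finite_cnbh[of c]
      by (simp add: card_Diff_subset)
    then have "cnbh c - {c, a} \<noteq> {}" by (metis card.empty zero_neq_numeral)
    then obtain w where w: "w \<in> cnbh c" "w \<noteq> c" "w \<noteq> a" by blast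
    have "\<forall>x\<in>cnbh c - {a}. 1 / real (card (Iset C x)) \<le> 1/2"
    proof
      fix x assume x: "x \<in> cnbh c - {a}"
      show "1 / real (card (Iset C x)) \<le> 1/2"
      proof (cases "x = c")
        case True
        have "w \<in> Iset C c" using w allC cnbh_sym unfolding Iset_def by auto
        then have "card (Iset C c) \<ge> 2"
          using card_ge2[OF finite_Iset cin[OF cnbh_self[of c]], of w] w by auto
        then show ?thesis using half True by simp
      next
        case False
        then have "x \<in> C" using x allC by auto
        then have "card (Iset C x) \<ge> 2" using x False neighC by auto
        then show ?thesis using half by blast
      qed
    qed
    then show ?thesis using sum7[OF finite_cnbh card_cnbh le1] by blast
  next
    case False
    have "\<forall>x\<in>cnbh c - {c}. 1 / real (card (Iset C x)) \<le> 1/2"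
    proof
      fix x assume x: "x \<in> cnbh c - {c}"
      show "1 / real (card (Iset C x)) \<le> 1/2"
      proof (cases "x \<in> C")
        case True
        then have "card (Iset C x) \<ge> 2" using x neighC by auto
        then show ?thesis using half by blast
      next
        case nC: False
        then have "Iset C x \<noteq> {c}" using False x by auto
        then obtain y where "y \<in> Iset C x" "y \<noteq> c" using cin x by blast
        then have "card (Iset C x) \<ge> 2" using card_ge2[OF finite_Iset cin, of x y] x by auto
        then show ?thesis using half by simp
      qed
    qed
    then show ?thesis using sum7[OF finite_cnbh card_cnbh le1] by blast
  qed
qed


lemma count:
  assumes sol: "solid_locating_dominating C"
  shows "real (card (Vbox n)) - 1 \<le> 4 * real (card (C \<inter> Vbox (Suc n)))"
proof -
  let ?B = "Vbox n" and ?B' = "C \<inter> Vbox (Suc n)"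
  let ?g = "\<lambda>u. 1 / real (card (Iset C u))"
  have finB: "finite ?B" "finite ?B'" using finite_Vbox by auto
  have e1: "card {u\<in>?B. Iset C u = {}} \<le> Suc 0"
  proof (subst card_le_Suc0_iff_eq)
    show "finite {u\<in>?B. Iset C u = {}}" using finB by auto
    show "\<forall>a1\<in>{u\<in>?B. Iset C u = {}}. \<forall>a2\<in>{u\<in>?B. Iset C u = {}}. a1 = a2"
    proof (intro ballI, rule ccontr)
      fix a1 a2 assume a: "a1 \<in> {u\<in>?B. Iset C u = {}}" "a2 \<in> {u\<in>?B. Iset C u = {}}" "a1 \<noteq> a2"
      have "a1 \<notin> C" "a2 \<notin> C" using a cnbh_self[of a1] cnbh_self[of a2] unfolding Iset_def by blast+
      then have "Iset C a1 - Iset C a2 \<noteq> {}" using sol a(3) unfolding solid_locating_dominating_def by blast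
      then show False using a by auto
    qed
  qed
  have "?B \<subseteq> {u\<in>?B. Iset C u \<noteq> {}} \<union> {u\<in>?B. Iset C u = {}}" by auto
  then have "card ?B \<le> card ({u\<in>?B. Iset C u \<noteq> {}} \<union> {u\<in>?B. Iset C u = {}})"
    using finB by (intro card_mono) auto
  also have "\<dots> \<le> card {u\<in>?B. Iset C u \<noteq> {}} + card {u\<in>?B. Iset C u = {}}"
    by (rule card_Un_le)
  finally have h1: "real (card ?B) - 1 \<le> real (card {u\<in>?B. Iset C u \<noteq> {}})" using e1 by linarith
  have inner: "(\<Sum>c\<in>Iset C u. ?g u) = (if Iset C u \<noteq> {} then 1 else 0)" for u
    using finite_Iset[of C u] by simp
  have h2: "real (card {u\<in>?B. Iset C u \<noteq> {}}) = (\<Sum>u\<in>?B. \<Sum>c\<in>Iset C u. ?g u)"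
    unfolding inner using finB by (simp add: sum.inter_filter[symmetric])
  have Ieq: "Iset C u = {c. c \<in> ?B' \<and> c \<in> cnbh u}" if "u \<in> ?B" for u
    using cnbh_Vbox[OF that] unfolding Iset_def by auto
  have "(\<Sum>u\<in>?B. \<Sum>c\<in>Iset C u. ?g u) = (\<Sum>u\<in>?B. \<Sum>c\<in>{c. c \<in> ?B' \<and> c \<in> cnbh u}. ?g u)"
    using Ieq by (intro sum.cong) auto
  also have "\<dots> = (\<Sum>c\<in>?B'. \<Sum>u\<in>{u. u \<in> ?B \<and> c \<in> cnbh u}. ?g u)"
    by (rule sum.swap_restrict[OF finB])
  also have "\<dots> \<le> (\<Sum>c\<in>?B'. 4)"
  proof (rule sum_mono)
    fix c assume c: "c \<in> ?B'"
    have "(\<Sum>u\<in>{u. u \<in> ?B \<and> c \<in> cnbh u}. ?g u) \<le> (\<Sum>u\<in>cnbh c. ?g u)"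
      by (rule sum_mono2[OF finite_cnbh]) (auto simp: cnbh_sym)
    also have "\<dots> \<le> 4" using share[OF sol] c by auto
    finally show "(\<Sum>u\<in>{u. u \<in> ?B \<and> c \<in> cnbh u}. ?g u) \<le> 4" .
  qed
  finally show ?thesis using h1 h2 by simp
qed


lemma self_imp_solid: "self_locating_dominating C \<Longrightarrow> solid_locating_dominating C"
  unfolding solid_locating_dominating_def
proof (intro conjI allI impI)
  assume s: "self_locating_dominating C"
  then show "C \<noteq> {}" unfolding self_locating_dominating_def by blast
  fix u v assume uv: "u \<notin> C" "v \<notin> C" "u \<noteq> v"
  show "Iset C u - Iset C v \<noteq> {}"
  proof
    assume "Iset C u - Iset C v = {}"
    then have sub: "Iset C u \<subseteq> Iset C v" by blast
    have "v \<in> (\<Inter>c\<in>Iset C v. cnbh c)" using cnbh_sym unfolding Iset_def by auto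
    also have "\<dots> \<subseteq> (\<Inter>c\<in>Iset C u. cnbh c)" using sub by blast
    also have "\<dots> = {u}" using s uv(1) unfolding self_locating_dominating_def by blast
    finally show False using uv by auto
  qed
qed

lemma mid1: "cnbh (i,j+1) \<inter> cnbh (i,j-1) = {(i,j)}" by (auto simp: cnbh_eq)
lemma mid2: "cnbh (i+1,j) \<inter> cnbh (i-1,j) = {(i,j)}" by (auto simp: cnbh_eq)
lemma mid3: "cnbh (i+1,j-1) \<inter> cnbh (i-1,j+1) = {(i,j)}" by (auto simp: cnbh_eq)

lemma C0_self: "self_locating_dominating {(i, j). even i \<and> even j}"
  unfolding self_locating_dominating_def
proof (intro conjI allI impI)
  let ?C = "{(i::int, j::int). even i \<and> even j}"
  show "?C \<noteq> {}" by (metis (mono_tags, lifting) case_prodI empty_iff even_zero mem_Collect_eq)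
  fix u assume u: "u \<notin> ?C"
  obtain i j where ij: "u = (i,j)" by (cases u)
  have "Iset ?C u \<noteq> {} \<and> (\<Inter>c\<in>Iset ?C u. cnbh c) = {u}"
  proof (cases "even i")
    case True
    then have oj: "odd j" using u ij by auto
    have I: "Iset ?C u = {(i,j+1),(i,j-1)}" (is "_ = ?S") using True oj unfolding ij Iset_def cnbh_eq by auto
    have "(\<Inter>c\<in>?S. cnbh c) = {(i,j)}" using mid1 by simp
    then show ?thesis using I ij by simp
  next
    case False
    show ?thesis
    proof (cases "even j")
      case True
      have I: "Iset ?C u = {(i+1,j),(i-1,j)}" (is "_ = ?S") using True False unfolding ij Iset_def cnbh_eq by auto
      have "(\<Inter>c\<in>?S. cnbh c) = {(i,j)}" using mid2 by simp
    then show ?thesis using I ij by simp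
    next
      case oj: False
      have I: "Iset ?C u = {(i+1,j-1),(i-1,j+1)}" (is "_ = ?S") using oj False unfolding ij Iset_def cnbh_eq by auto
      have "(\<Inter>c\<in>?S. cnbh c) = {(i,j)}" using mid3 by simp
    then show ?thesis using I ij by simp
    qed
  qed
  then show "Iset ?C u \<noteq> {}" "(\<Inter>c\<in>Iset ?C u. cnbh c) = {u}" by auto
qed

lemma t_lim: "(\<lambda>n. 1 / (2 * real n + 1)) \<longlonglongrightarrow> 0"
proof (rule tendsto_sandwich[OF _ _ tendsto_const LIMSEQ_inverse_real_of_nat])
  show "\<forall>\<^sub>F n in sequentially. 0 \<le> 1 / (2 * real n + 1)" by simp
  show "\<forall>\<^sub>F n in sequentially. 1 / (2 * real n + 1) \<le> inverse (real (Suc n))"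
    by (intro always_eventually allI) (simp add: field_simps)
qed

lemma b_lim: "(\<lambda>n. ((2 * real n - 1)^2 - 1) / (4 * (2 * real n + 1)^2)) \<longlonglongrightarrow> 1/4"
proof -
  let ?t = "\<lambda>n. 1 / (2 * real n + 1)"
  have L: "(\<lambda>n. ((1 - 2 * ?t n)^2 - (?t n)^2) / 4) \<longlonglongrightarrow> ((1 - 2 * 0)^2 - 0^2) / 4"
    by (intro tendsto_intros t_lim) auto
  have E: "((1 - 2 * ?t n)^2 - (?t n)^2) / 4 = ((2 * real n - 1)^2 - 1) / (4 * (2 * real n + 1)^2)" for n
  proof -
    have p: "2 * real n + 1 > 0" by simp
    have "1 - 2 * ?t n = (2 * real n - 1) / (2 * real n + 1)" using p by (simp add: field_simps)
    then show ?thesis using p by (simp add: power_divide field_simps)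
  qed
  show ?thesis using L unfolding E by simp
qed

lemma half_lims: "(\<lambda>n. (real n / (2 * real n + 1))^2) \<longlonglongrightarrow> 1/4"
    "(\<lambda>n. ((real n + 1) / (2 * real n + 1))^2) \<longlonglongrightarrow> 1/4"
proof -
  let ?t = "\<lambda>n. 1 / (2 * real n + 1)"
  have e1: "real n / (2 * real n + 1) = 1/2 - ?t n / 2" for n by (simp add: field_simps)
  have e2: "(real n + 1) / (2 * real n + 1) = 1/2 + ?t n / 2" for n by (simp add: field_simps)
  have "(\<lambda>n. (1/2 - ?t n / 2)^2) \<longlonglongrightarrow> (1/2 - 0/2)^2" by (intro tendsto_intros t_lim) auto
  then show "(\<lambda>n. (real n / (2 * real n + 1))^2) \<longlonglongrightarrow> 1/4" unfolding e1 by (simp add: power2_eq_square)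
  have "(\<lambda>n. (1/2 + ?t n / 2)^2) \<longlonglongrightarrow> (1/2 + 0/2)^2" by (intro tendsto_intros t_lim) auto
  then show "(\<lambda>n. ((real n + 1) / (2 * real n + 1))^2) \<longlonglongrightarrow> 1/4" unfolding e2 by (simp add: power2_eq_square)
qed

lemma density_lower:
  assumes sol: "solid_locating_dominating C"
  shows "density C \<ge> ereal (1/4)"
proof -
  define b where "b n = ((2 * real n - 1)^2 - 1) / (4 * (2 * real n + 1)^2)" for n
  have ev: "eventually (\<lambda>n. ereal (b n) \<le> ereal (real (card (C \<inter> Vbox n)) / real (card (Vbox n)))) sequentially"
    unfolding eventually_sequentially
  proof (intro exI allI impI)
    fix n :: nat assume "1 \<le> n"
    then obtain m where m: "n = Suc m" by (cases n) auto
    have c: "real (card (Vbox m)) - 1 \<le> 4 * real (card (C \<inter> Vbox n))" using count[OF sol, of m] m by simp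
    have cm: "real (card (Vbox m)) = (2 * real n - 1)^2" unfolding card_Vbox m by simp
    have cn: "real (card (Vbox n)) = (2 * real n + 1)^2" unfolding card_Vbox by simp
    have "b n \<le> real (card (C \<inter> Vbox n)) / (2 * real n + 1)^2"
    proof -
      have "b n = (((2 * real n - 1)^2 - 1) / 4) / (2 * real n + 1)^2" unfolding b_def by simp
      also have "\<dots> \<le> real (card (C \<inter> Vbox n)) / (2 * real n + 1)^2"
        by (rule divide_right_mono) (use c cm in auto)
      finally show ?thesis .
    qed
    then show "ereal (b n) \<le> ereal (real (card (C \<inter> Vbox n)) / real (card (Vbox n)))"
      using cn by simp
  qed
  have "b \<longlonglongrightarrow> 1/4" unfolding b_def by (rule b_lim)
  then have "(\<lambda>n. ereal (b n)) \<longlonglongrightarrow> ereal (1/4)" by (simp add: lim_ereal)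
  then have "limsup (\<lambda>n. ereal (b n)) = ereal (1/4)" by (simp add: lim_imp_Limsup)
  moreover have "limsup (\<lambda>n. ereal (b n)) \<le> density C"
    unfolding density_def by (rule Limsup_mono[OF ev])
  ultimately show ?thesis by simp
qed


lemma card_C0_box:
  "card ({(i, j). even i \<and> even j} \<inter> Vbox n) = (2 * (n div 2) + 1)^2"
proof -
  define m where "m = int (n div 2)"
  define E where "E = {i::int. even i \<and> \<bar>i\<bar> \<le> int n}"
  have Eq: "E = (\<lambda>k. 2*k) ` {-m..m}"
  proof (rule set_eqI, rule iffI)
    fix i assume "i \<in> E"
    then obtain k where k: "i = 2*k" "\<bar>2*k\<bar> \<le> int n" unfolding E_def by (auto elim: evenE)
    then have "\<bar>k\<bar> \<le> m" unfolding m_def by (simp add: zdiv_int[symmetric])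
    then show "i \<in> (\<lambda>k. 2*k) ` {-m..m}" using k by (intro image_eqI[of _ _ k]) auto
  next
    fix i assume "i \<in> (\<lambda>k. 2*k) ` {-m..m}"
    then obtain k where k: "i = 2*k" "\<bar>k\<bar> \<le> m" by auto
    then have "\<bar>2*k\<bar> \<le> int n" unfolding m_def by (simp add: zdiv_int[symmetric])
    then show "i \<in> E" using k unfolding E_def by auto
  qed
  have cE: "card E = 2 * (n div 2) + 1"
    unfolding Eq by (subst card_image) (auto simp: inj_on_def m_def)
  have "{(i, j). even i \<and> even j} \<inter> Vbox n = E \<times> E" unfolding E_def Vbox_def by auto
  then show ?thesis using cE by (simp add: card_cartesian_product power2_eq_square)
qed

lemma C0_density: "density {(i, j). even i \<and> even j} = ereal (1/4)"
proof -
  define a where "a n = real (card ({(i, j). even i \<and> even j} \<inter> Vbox n)) / real (card (Vbox n))" for n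
  have aeq: "a n = ((2 * real (n div 2) + 1) / (2 * real n + 1))^2" for n
    unfolding a_def card_C0_box card_Vbox by (simp add: power_divide add.commute)
  have lo: "(real n / (2 * real n + 1))^2 \<le> a n" for n
  proof -
    have "real n \<le> 2 * real (n div 2) + 1" by linarith
    then show ?thesis unfolding aeq by (intro power_mono divide_right_mono) auto
  qed
  have hi: "a n \<le> ((real n + 1) / (2 * real n + 1))^2" for n
  proof -
    have "2 * real (n div 2) + 1 \<le> real n + 1" by linarith
    then show ?thesis unfolding aeq by (intro power_mono divide_right_mono) auto
  qed
  have "a \<longlonglongrightarrow> 1/4"
    by (rule tendsto_sandwich[OF always_eventually always_eventually half_lims(1) half_lims(2)])
      (intro allI lo hi)+
  then have "(\<lambda>n. ereal (a n)) \<longlonglongrightarrow> ereal (1/4)" by (simp add: lim_ereal)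
  then show ?thesis unfolding density_def a_def[symmetric] by (simp add: lim_imp_Limsup)
qed

theorem theorem7:
  defines "C0 \<equiv> {(i, j). even i \<and> even j}"
  shows "self_locating_dominating C0 \<and> solid_locating_dominating C0 \<and>
         density C0 = ereal (1/4) \<and>
         (\<forall>C. self_locating_dominating C \<longrightarrow> density C \<ge> ereal (1/4)) \<and>
         (\<forall>C. solid_locating_dominating C \<longrightarrow> density C \<ge> ereal (1/4))"
  unfolding C0_def using C0_self self_imp_solid C0_density density_lower by blast

end
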